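(* Let $G:\mathbb{R}^{d_x}\to\mathbb{R}$ be $\mu_x$-strongly convex and $L_x$-smooth, $F:\mathbb{R}^{d_y}\to\mathbb{R}\cup\{+\infty\}$ proper closed convex with conjugate $F^\star$, $K:\mathbb{R}^{d_x}\to\mathbb{R}^{d_y}$ linear, and $(x^\star,y^\star)$ a solution of $\min_x\max_y\{G(x)+\langle y,Kx\rangle-F^\star(y)\}$. Choose any $\eta_x,\eta_y>0$ (and any $\beta_y>0$, $\theta\in[0,1]$). Then the iterates of APDA satisfy, for all $k\ge0$, $(1+\mu_x\eta_x)\frac{1}{\eta_x}\|x^{k+1}-x^\star\|^2\le\frac{1}{\eta_x}\|x^k-x^\star\|^2-\frac{1}{\eta_x}\|x^{k+1}-x^k\|^2-2\langle K^\top\bar y^k-K^\top y^\star,x^{k+1}-x^\star\rangle-\frac{1}{L_x}\|\nabla G(x^{k+1})-\nabla G(x^\star)\|^2.$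
   Context: $\mu_x$-strong convexity: $G(x')-G(x'')-\langle\nabla G(x''),x'-x''\rangle\ge\frac{\mu_x}{2}\|x'-x''\|^2$; $L_x$-smoothness: $\|\nabla G(x')-\nabla G(x'')\|\le L_x\|x'-x''\|$. A solution satisfies $\nabla G(x^\star)+K^\top y^\star=0$ and $0\in\partial F^\star(y^\star)-Kx^\star$. APDA: given $(x^0,y^0)$, $\bar y^0=y^0$, stepsizes $\eta_x,\eta_y,\beta_y>0$, $\theta\in[0,1]$, for $k=0,1,\dots$: $x^{k+1}$ satisfies $x^{k+1}=x^k-\eta_x(\nabla G(x^{k+1})+K^\top\bar y^k)$; $y^{k+1}=y^k-\eta_y(g^{k+1}-Kx^{k+1})-\eta_y\beta_yK(K^\top y^k+\nabla G(x^{k+1}))$ with $g^{k+1}\in\partial F^\star(y^{k+1})$ (a proximal step on $F^\star$); $\bar y^{k+1}=y^{k+1}+\theta(y^{k+1}-y^k)$. *)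

theory Defs
  imports "HOL-Analysis.Analysis"
begin

definition proper_fun :: "('a \<Rightarrow> ereal) \<Rightarrow> bool" where
  "proper_fun F \<longleftrightarrow> (\<forall>x. F x \<noteq> -\<infinity>) \<and> (\<exists>x. F x \<noteq> \<infinity>)"

definition epigraph :: "('a \<Rightarrow> ereal) \<Rightarrow> ('a \<times> real) set" where
  "epigraph F = {(x, t). F x \<le> ereal t}"

definition closed_fun :: "('a::topological_space \<Rightarrow> ereal) \<Rightarrow> bool" where
  "closed_fun F \<longleftrightarrow> closed (epigraph F)"

definition convex_fun :: "('a::real_vector \<Rightarrow> ereal) \<Rightarrow> bool" where
  "convex_fun F \<longleftrightarrow> convex (epigraph F)"

definition conjugate :: "('a::real_inner \<Rightarrow> ereal) \<Rightarrow> 'a \<Rightarrow> ereal" where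
  "conjugate F y = (SUP x. ereal (inner y x) - F x)"

definition subdiff :: "('a::real_inner \<Rightarrow> ereal) \<Rightarrow> 'a \<Rightarrow> 'a set" where
  "subdiff f y = {g. \<bar>f y\<bar> \<noteq> \<infinity> \<and> (\<forall>z. f y + ereal (inner g (z - y)) \<le> f z)}"

end

theory Submission
  imports Defs
begin

lemma descent:
  fixes G :: "'a::real_inner \<Rightarrow> real" and gradG :: "'a \<Rightarrow> 'a"
  assumes grad: "\<And>z. (G has_derivative (\<lambda>h. inner (gradG z) h)) (at z)"
    and smooth: "\<And>x' x''. norm (gradG x' - gradG x'') \<le> L * norm (x' - x'')"
  shows "G y \<le> G x + inner (gradG x) (y - x) + L / 2 * (norm (y - x))\<^sup>2"
proof -
  define v where "v = y - x"
  define \<phi> where "\<phi> t = G (x + t *\<^sub>R v) - t * inner (gradG x) v - L / 2 * t\<^sup>2 * (norm v)\<^sup>2" for t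
  have D: "(\<phi> has_real_derivative (inner (gradG (x + t *\<^sub>R v)) v - inner (gradG x) v - L * t * (norm v)\<^sup>2)) (at t)" for t
  proof -
    have p: "((\<lambda>t. x + t *\<^sub>R v) has_derivative (\<lambda>h. h *\<^sub>R v)) (at t)"
      by (auto intro!: derivative_eq_intros)
    have "((\<lambda>t. G (x + t *\<^sub>R v)) has_derivative (\<lambda>h. inner (gradG (x + t *\<^sub>R v)) (h *\<^sub>R v))) (at t)"
      by (rule has_derivative_compose[OF p grad])
    hence g: "((\<lambda>t. G (x + t *\<^sub>R v)) has_real_derivative (inner (gradG (x + t *\<^sub>R v)) v)) (at t)"
      unfolding has_field_derivative_def by (simp add: mult.commute[of _ "inner _ _"])
    show ?thesis unfolding \<phi>_def
      by (rule g derivative_eq_intros refl | simp)+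
  qed
  have "\<phi> 1 \<le> \<phi> 0"
  proof (rule DERIV_nonpos_imp_nonincreasing[of 0 1])
    fix t :: real assume t: "0 \<le> t" "t \<le> 1"
    have "inner (gradG (x + t *\<^sub>R v)) v - inner (gradG x) v = inner (gradG (x + t *\<^sub>R v) - gradG x) v"
      by (simp add: inner_diff_left)
    also have "\<dots> \<le> norm (gradG (x + t *\<^sub>R v) - gradG x) * norm v"
      by (rule norm_cauchy_schwarz)
    also have "\<dots> \<le> (L * norm (t *\<^sub>R v)) * norm v"
      using smooth[of "x + t *\<^sub>R v" x] by (intro mult_right_mono) auto
    also have "\<dots> = L * t * (norm v)\<^sup>2" using t by (simp add: power2_eq_square)
    finally show "\<exists>y. DERIV \<phi> t :> y \<and> y \<le> 0" using D by fastforce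
  qed simp
  thus ?thesis unfolding \<phi>_def v_def by simp
qed

lemma cocoercive_aux:
  fixes G :: "'a::real_inner \<Rightarrow> real" and gradG :: "'a \<Rightarrow> 'a"
  assumes grad: "\<And>z. (G has_derivative (\<lambda>h. inner (gradG z) h)) (at z)"
    and smooth: "\<And>x' x''. norm (gradG x' - gradG x'') \<le> L * norm (x' - x'')"
    and conv: "\<And>x' x''. G x' - G x'' - inner (gradG x'') (x' - x'') \<ge> 0"
    and L: "L > 0"
  shows "G y \<ge> G x + inner (gradG x) (y - x) + 1 / (2 * L) * (norm (gradG y - gradG x))\<^sup>2"
proof -
  define g where "g = gradG y - gradG x"
  define z where "z = y - (1 / L) *\<^sub>R g"
  have c: "G z \<ge> G x + inner (gradG x) (z - x)" using conv[of z x] by simp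
  have d: "G z \<le> G y + inner (gradG y) (z - y) + L / 2 * (norm (z - y))\<^sup>2"
    by (rule descent[OF grad smooth])
  have e1: "inner (gradG x) (z - x) = inner (gradG x) (y - x) - (1/L) * inner (gradG x) g"
    unfolding z_def by (simp add: inner_diff_right algebra_simps)
  have e2: "inner (gradG y) (z - y) = - (1/L) * inner (gradG y) g"
    unfolding z_def by (simp add: inner_diff_right algebra_simps)
  have e3: "L / 2 * (norm (z - y))\<^sup>2 = 1 / (2 * L) * (norm g)\<^sup>2"
    unfolding z_def using L by (simp add: power2_eq_square power_mult_distrib field_simps)
  have e4: "inner (gradG y) g - inner (gradG x) g = (norm g)\<^sup>2"
    unfolding g_def by (simp add: inner_diff_left power2_norm_eq_inner)
  have "(1/L) * inner (gradG y) g - (1/L) * inner (gradG x) g = (1/L) * (norm g)\<^sup>2"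
    using e4 by (metis diff_divide_distrib times_divide_eq_left mult_1)
  hence "G x + inner (gradG x) (y - x) + 1 / (2 * L) * (norm g)\<^sup>2 \<le> G y"
    using c d e1 e2 e3 L by (simp add: field_simps) 
  thus ?thesis unfolding g_def .
qed

theorem lemma6:
  fixes G :: "real^'n \<Rightarrow> real" and gradG :: "real^'n \<Rightarrow> real^'n"
    and F :: "real^'m \<Rightarrow> ereal" and K :: "real^'n^'m"
    and \<mu>x Lx \<eta>x \<eta>y \<beta>y \<theta> :: real
    and xs :: "real^'n" and ys :: "real^'m"
    and x :: "nat \<Rightarrow> real^'n" and y ybar :: "nat \<Rightarrow> real^'m"
  assumes grad: "\<And>z. (G has_derivative (\<lambda>h. inner (gradG z) h)) (at z)"
    and mu_pos: "\<mu>x > 0"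
    and strongly_convex: "\<And>x' x''. G x' - G x'' - inner (gradG x'') (x' - x'') \<ge> \<mu>x / 2 * (norm (x' - x''))\<^sup>2"
    and L_pos: "Lx > 0"
    and smooth: "\<And>x' x''. norm (gradG x' - gradG x'') \<le> Lx * norm (x' - x'')"
    and F_proper: "proper_fun F" and F_closed: "closed_fun F" and F_convex: "convex_fun F"
    and sol1: "gradG xs + transpose K *v ys = 0"
    and sol2: "K *v xs \<in> subdiff (conjugate F) ys"
    and eta_x: "\<eta>x > 0" and eta_y: "\<eta>y > 0" and beta_y: "\<beta>y > 0"
    and theta: "0 \<le> \<theta>" "\<theta> \<le> 1"
    and ybar0: "ybar 0 = y 0"
    and x_step: "\<And>k. x (Suc k) = x k - \<eta>x *\<^sub>R (gradG (x (Suc k)) + transpose K *v ybar k)"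
    and y_step: "\<And>k. \<exists>g. g \<in> subdiff (conjugate F) (y (Suc k)) \<and>
        y (Suc k) = y k - \<eta>y *\<^sub>R (g - K *v x (Suc k))
                    - (\<eta>y * \<beta>y) *\<^sub>R (K *v (transpose K *v y k + gradG (x (Suc k))))"
    and ybar_step: "\<And>k. ybar (Suc k) = y (Suc k) + \<theta> *\<^sub>R (y (Suc k) - y k)"
  shows "\<forall>k. (1 + \<mu>x * \<eta>x) * (1 / \<eta>x) * (norm (x (Suc k) - xs))\<^sup>2
     \<le> (1 / \<eta>x) * (norm (x k - xs))\<^sup>2 - (1 / \<eta>x) * (norm (x (Suc k) - x k))\<^sup>2
        - 2 * inner (transpose K *v ybar k - transpose K *v ys) (x (Suc k) - xs)
        - (1 / Lx) * (norm (gradG (x (Suc k)) - gradG xs))\<^sup>2"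
proof
  fix k
  define a where "a = x (Suc k)"
  define b where "b = x k"
  define d where "d = a - xs"
  define gd where "gd = gradG a - gradG xs"
  define P where "P = inner (transpose K *v ybar k - transpose K *v ys) d"
  define Q where "Q = inner gd d"
  have conv: "\<And>x' x''. G x' - G x'' - inner (gradG x'') (x' - x'') \<ge> 0"
    using strongly_convex mu_pos
    by (meson divide_nonneg_pos less_eq_real_def mult_nonneg_nonneg order_trans zero_le_power2 zero_less_numeral)
  have sc1: "G a - G xs - inner (gradG xs) (a - xs) \<ge> \<mu>x / 2 * (norm d)\<^sup>2"
    using strongly_convex[of a xs] unfolding d_def .
  have sc2: "G xs - G a - inner (gradG a) (xs - a) \<ge> \<mu>x / 2 * (norm d)\<^sup>2"
    using strongly_convex[of xs a] unfolding d_def by (simp add: norm_minus_commute)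
  have Q1: "Q \<ge> \<mu>x * (norm d)\<^sup>2"
  proof -
    have "inner (gradG a) (xs - a) = - inner (gradG a) d" unfolding d_def
      by (metis inner_minus_right minus_diff_eq)
    thus ?thesis using sc1 sc2 unfolding Q_def gd_def d_def by (simp add: inner_diff_left)
  qed
  have cc1: "G a \<ge> G xs + inner (gradG xs) (a - xs) + 1 / (2 * Lx) * (norm gd)\<^sup>2"
    unfolding gd_def by (rule cocoercive_aux[OF grad smooth conv L_pos])
  have cc2: "G xs \<ge> G a + inner (gradG a) (xs - a) + 1 / (2 * Lx) * (norm gd)\<^sup>2"
    using cocoercive_aux[OF grad smooth conv L_pos, where y=xs and x=a] unfolding gd_def
    by (simp add: norm_minus_commute)
  have Q2: "Q \<ge> (1 / Lx) * (norm gd)\<^sup>2"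
  proof -
    have "inner (gradG a) (xs - a) = - inner (gradG a) d" unfolding d_def
      by (metis inner_minus_right minus_diff_eq)
    thus ?thesis using cc1 cc2 unfolding Q_def gd_def d_def by (simp add: inner_diff_left)
  qed
  have Kys: "gradG xs = - (transpose K *v ys)" using sol1 by (simp add: add_eq_0_iff)
  have ba: "b - a = \<eta>x *\<^sub>R (gd + (transpose K *v ybar k - transpose K *v ys))"
    using x_step[of k] unfolding a_def b_def gd_def Kys by (simp add: algebra_simps)
  have inn: "inner (b - a) d = \<eta>x * (Q + P)"
    unfolding ba Q_def P_def by (simp add: inner_add_left)
  have nb: "(norm (b - xs))\<^sup>2 = (norm (b - a))\<^sup>2 + 2 * inner (b - a) d + (norm d)\<^sup>2"
  proof -
    have sq: "\<And>u w::real^'n. (norm (u+w))\<^sup>2 = (norm u)\<^sup>2 + 2*inner u w + (norm w)\<^sup>2"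
      by (simp add: power2_norm_eq_inner inner_add_left inner_add_right inner_commute)
    have e: "b - xs = (b - a) + d" unfolding d_def by simp
    show ?thesis unfolding e by (rule sq)
  qed
  have nab: "norm (a - b) = norm (b - a)" by (rule norm_minus_commute)
  have goal: "(1 + \<mu>x * \<eta>x) * (1 / \<eta>x) * (norm d)\<^sup>2
     \<le> (1 / \<eta>x) * (norm (b - xs))\<^sup>2 - (1 / \<eta>x) * (norm (a - b))\<^sup>2 - 2 * P - (1 / Lx) * (norm gd)\<^sup>2"
  proof -
    have "(1 / \<eta>x) * (norm (b - xs))\<^sup>2 - (1 / \<eta>x) * (norm (a - b))\<^sup>2 - 2 * P - (1 / Lx) * (norm gd)\<^sup>2
        = (1 / \<eta>x) * (norm d)\<^sup>2 + 2 * Q - (1 / Lx) * (norm gd)\<^sup>2"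
      using eta_x unfolding nb nab inn by (simp add: field_simps)
    moreover have "(1 + \<mu>x * \<eta>x) * (1 / \<eta>x) * (norm d)\<^sup>2 = (1 / \<eta>x) * (norm d)\<^sup>2 + \<mu>x * (norm d)\<^sup>2"
      using eta_x by (simp add: field_simps)
    ultimately show ?thesis using Q1 Q2 by linarith
  qed
  thus "(1 + \<mu>x * \<eta>x) * (1 / \<eta>x) * (norm (x (Suc k) - xs))\<^sup>2
     \<le> (1 / \<eta>x) * (norm (x k - xs))\<^sup>2 - (1 / \<eta>x) * (norm (x (Suc k) - x k))\<^sup>2
        - 2 * inner (transpose K *v ybar k - transpose K *v ys) (x (Suc k) - xs)
        - (1 / Lx) * (norm (gradG (x (Suc k)) - gradG xs))\<^sup>2"
    unfolding a_def b_def d_def gd_def P_def by simp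
qed

end
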